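(* Consider one time step $t^n\to t^{n+1}=t^n+\Delta t$ of the fully discrete semi-implicit discontinuous Galerkin scheme described in the context (periodic boundary conditions), starting from $\vec U_h^n=(\rho_h^n,\vec m_h^n,E_h^n)\in M_h^k\times\mathbf X_h^k\times M_h^k$ and producing $\vec U_h^{n+1}=(\rho_h^{n+1},\vec m_h^{n+1},E_h^{n+1})$. Assume that the intermediate DG solution $\vec U_h^{\mathrm P}$ satisfies $\vec U_h^{\mathrm P}(\vec x_q)\in G$ for all $\vec x_q\in S_h$. Then the scheme conserves density, momentum and total energy: $$(\rho_h^{n},1)=(\rho_h^{n+1},1),\qquad (\vec m_h^{n},\vec 1)=(\vec m_h^{n+1},\vec 1),\qquad (E_h^{n},1)=(E_h^{n+1},1).$$
   Context: Setting. The compressible Navier--Stokes system with conserved variables $\vec U=(\rho,\vec m,E)$, velocity $\vec u=\vec m/\rho$, internal energy $e$ with $E=\rho e+\frac{\|\vec m\|^2}{2\rho}$, ideal gas pressure $p=(\gamma-1)\rho e$ ($\gamma>1$), Reynolds number $\mathrm{Re}>0$, heat parameter $\lambda>0$, strain $\varepsilon(\vec u)=\frac12(\nabla\vec u+\nabla\vec u^T)$. The admissible set is $G=\{(\rho,\vec m,E):\rho>0,\ E-\frac{\|\vec m\|^2}{2\rho}>0\}$ and, for a small $\epsilon>0$, $G^\epsilon=\{(\rho,\vec m,E):\rho\ge\epsilon,\ E-\frac{\|\vec m\|^2}{2\rho}\ge\epsilon\}$. The domain $\Omega\subset\mathbb R^2$ is a rectangle with periodic boundary conditions, partitioned uniformly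 into square cells $K$ (set $\mathcal E_h$) of diameter $h$; $\Gamma_h$ denotes the set of all faces (periodic faces treated as interior). For each face $e$ shared by $K_{i^-},K_{i^+}$ ($i^-<i^+$), $\vec n_e$ points from $K_{i^-}$ to $K_{i^+}$, $\{v\}=\frac12(v|_{K_{i^-}}+v|_{K_{i^+}})$, $[v]=v|_{K_{i^-}}-v|_{K_{i^+}}$. For $k\ge1$, $M_h^k$ (resp. $\mathbf X_h^k$) is the space of scalar (resp. $\mathbb R^2$-valued) functions whose restriction to each cell lies in $\mathbb Q^k$ (polynomials of degree $\le k$ in each variable). $(\cdot,\cdot)$ denotes the $L^2(\Omega)$ inner product evaluated cellwise by the tensor-product $(k+1)$-point Gauss quadrature, and $\langle\cdot,\cdot\rangle$ the one evaluated by the tensor-product $(k+1)$-point Gauss--Lobatto quadrature; all volume and face integrals in the forms below are evaluated by Gauss--Lobatto quadrature. $S_h$ is the union over cells $K$ of the Gauss quadrature points used in the hyperbolic step (volume and face points) together with auxiliary points formed by tensor products of $(k+1)$-point Gauss and $L$-point Gauss--Lobatto points ($2L-3\ge k$) in each direction. Zhang--Shu limiter on a cell $K$ with point set $S_K$ (applied when the cell average $\overline{\vec U}_K\in G^\epsilon$): replace $\rho_K$ by $\hat\rho_K=\theta_\rho(\rho_K-\bar\rho_K)+\bar\rho_K$, $\theta_\rho=\min\{1,\frac{\bar\rho_K-\epsilon}{\bar\rho_K-\min_{S_K}\rho_K}\}$, then replace $\hat{\vec U}_K=(\hat\rho_K,\vec m_K,E_K)$ by $\theta_e(\hat{\vec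 U}_K-\overline{\vec U}_K)+\overline{\vec U}_K$ with $\theta_e=\min\{1,\frac{\overline{\rho e}_K-\epsilon}{\overline{\rho e}_K-\min_{S_K}\rho e_K}\}$, where $\overline{\rho e}_K=\bar E_K-\frac{\|\bar{\vec m}_K\|^2}{2\bar\rho_K}$ and $\rho e_K=E_K-\frac{\|\vec m_K\|^2}{2\hat\rho_K}$ pointwise. Hyperbolic step (H) over time $\Delta t/2$ (possibly in several substeps whose sizes sum to $\Delta t/2$): the semi-discrete DG method $\frac{d}{dt}(\vec U_h,\varPsi_h)_K=(\vec F^a(\vec U_h),\nabla\varPsi_h)_K-\int_{\partial K}\widehat{\vec F^a\cdot\vec n_K}\,\varPsi_h$ for all $\varPsi_h\in\mathbb Q^k(K)$, with Euler flux $\vec F^a=(\rho\vec u,\rho\vec u\otimes\vec u+p\mathbf I,(E+p)\vec u)$ and local Lax--Friedrichs flux $\widehat{\vec F^a\cdot\vec n_K}=\frac12(\vec F^a(\vec U^-)+\vec F^a(\vec U^+))\cdot\vec n_K-\frac{\alpha_e}{2}(\vec U^+-\vec U^-)$ ($\alpha_e$ the maximal wave speed on face $e$), discretized in time by the third-order SSP Runge--Kutta method $\vec U^{(1)}=\vec U^n+\tau L(\vec U^n)$, $\vec U^{(2)}=\frac34\vec U^n+\frac14(\vec U^{(1)}+\tau L(\vec U^{(1)}))$, $\vec U^{\text{new}}=\frac13\vec U^n+\frac23(\vec U^{(2)}+\tau L(\vec U^{(2)}))$, with the Zhang--Shu limiter on $S_h$ after each stage. One time step: (1) from $\vec U_h^n$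 compute $\vec U_h^{\mathrm H}$ by step (H). (2) Apply the Zhang--Shu limiter at the Gauss--Lobatto points; compute $(\vec u_h^{\mathrm H},e_h^{\mathrm H})\in\mathbf X_h^k\times M_h^k$ by $\langle\vec m_h^{\mathrm H},\vec\theta_h\rangle=\langle\rho_h^{\mathrm H}\vec u_h^{\mathrm H},\vec\theta_h\rangle$ and $\langle E_h^{\mathrm H},\chi_h\rangle=\langle\rho_h^{\mathrm H}e_h^{\mathrm H},\chi_h\rangle+\langle\frac{\vec m_h^{\mathrm H}}{2\rho_h^{\mathrm H}},\vec m_h^{\mathrm H}\chi_h\rangle$ for all $\vec\theta_h,\chi_h$. (3) With parameters $\vartheta\in(0,1]$, $\sigma\ge0$, $\tilde\sigma>0$, set $\rho_h^{\mathrm P}=\rho_h^{\mathrm H}$, find $\vec u_h^*\in\mathbf X_h^k$ with $\langle\rho_h^{\mathrm P}\vec u_h^*,\vec\theta_h\rangle+\frac{\Delta t}{2\mathrm{Re}}a_\varepsilon(\vec u_h^*,\vec\theta_h)+\frac{\Delta t}{3\mathrm{Re}}a_\lambda(\vec u_h^*,\vec\theta_h)=\langle\rho_h^{\mathrm H}\vec u_h^{\mathrm H},\vec\theta_h\rangle$ for all $\vec\theta_h\in\mathbf X_h^k$, set $\vec u_h^{\mathrm P}=2\vec u_h^*-\vec u_h^{\mathrm H}$; then find $e_h^*\in M_h^k$ with $\langle\rho_h^{\mathrm P}e_h^*,\chi_h\rangle+\frac{\vartheta\Delta t\lambda}{\mathrm{Re}}a_{\mathcal D}(e_h^*,\chi_h)=\langle\rho_h^{\mathrm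 H}e_h^{\mathrm H},\chi_h\rangle+\frac{\vartheta\Delta t}{\mathrm{Re}}b_\varepsilon(\vec u_h^*,\chi_h)+\frac{2\vartheta\Delta t}{3\mathrm{Re}}b_\lambda(\vec u_h^*,\chi_h)$ for all $\chi_h\in M_h^k$, and set $e_h^{\mathrm P}=\frac1\vartheta e_h^*+(1-\frac1\vartheta)e_h^{\mathrm H}$. Here $a_\varepsilon(\vec u,\vec\theta)=2\sum_K\int_K\varepsilon(\vec u):\varepsilon(\vec\theta)-2\sum_{e\in\Gamma_h}\int_e\{\varepsilon(\vec u)\vec n_e\}\cdot[\vec\theta]+2\sum_{e\in\Gamma_h}\int_e\{\varepsilon(\vec\theta)\vec n_e\}\cdot[\vec u]+\frac\sigma h\sum_{e\in\Gamma_h}\int_e[\vec u]\cdot[\vec\theta]$, $a_\lambda(\vec u,\vec\theta)=-\sum_K\int_K(\nabla\!\cdot\!\vec u)(\nabla\!\cdot\!\vec\theta)+\sum_{e\in\Gamma_h}\int_e\{\nabla\!\cdot\!\vec u\}[\vec\theta\cdot\vec n_e]-\sum_{e\in\Gamma_h}\int_e\{\nabla\!\cdot\!\vec\theta\}[\vec u\cdot\vec n_e]$, $a_{\mathcal D}(e,\chi)=\sum_K\int_K\nabla e\cdot\nabla\chi-\sum_{e'\in\Gamma_h}\int_{e'}\{\nabla e\cdot\vec n_{e'}\}[\chi]+\frac{\tilde\sigma}h\sum_{e'\in\Gamma_h}\int_{e'}[e][\chi]$, $b_\varepsilon(\vec u,\chi)=2\sum_K\int_K\varepsilon(\vec u):\varepsilon(\vec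 u)\chi+\frac\sigma h\sum_{e\in\Gamma_h}\int_e[\vec u]\cdot[\vec u]\{\chi\}$, $b_\lambda(\vec u,\chi)=-\sum_K\int_K(\nabla\!\cdot\!\vec u)^2\chi$. (4) Compute $(\vec m_h^{\mathrm P},E_h^{\mathrm P})$ by $\langle\vec m_h^{\mathrm P},\vec\theta_h\rangle=\langle\rho_h^{\mathrm P}\vec u_h^{\mathrm P},\vec\theta_h\rangle$, $\langle E_h^{\mathrm P},\chi_h\rangle=\langle\rho_h^{\mathrm P}e_h^{\mathrm P},\chi_h\rangle+\langle\frac{\vec m_h^{\mathrm P}}{2\rho_h^{\mathrm P}},\vec m_h^{\mathrm P}\chi_h\rangle$; if some cell average lies outside $G^\epsilon$, the total energy on each cell $K_i$ of an index set $T$ is shifted by a constant, $E_i\mapsto E_i-\bar E_i+\bar E_i^*$, where $(\bar E_i^* )_{i\in T}$ minimizes $\sum_{i\in T}|\bar E_i^*-\bar E_i|^2$ subject to $\sum_{i\in T}\bar E_i^*|K_i|=\sum_{i\in T}\bar E_i|K_i|$ and $(\bar\rho_i,\bar{\vec m}_i,\bar E_i^* )\in G^\epsilon$; then the Zhang--Shu limiter is applied on $S_h$; the result is $\vec U_h^{\mathrm P}$. (5) From $\vec U_h^{\mathrm P}$ compute $\vec U_h^{n+1}$ by step (H). All steps are assumed well defined (linear systems uniquely solvable, densities positive where divided by). *)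

theory Defs
  imports "HOL-Analysis.Analysis"
begin

(* A local polynomial in Q^k on the reference square [-1,1]^2: coefficients c p q of xi^p eta^q
   (only p,q <= k are used). *)
type_synonym poly2 = "nat \<Rightarrow> nat \<Rightarrow> real"
type_synonym cell = "nat \<times> nat"
type_synonym sfun = "cell \<Rightarrow> poly2"
(* vector-valued broken polynomial: component index |-> scalar one.
   Conserved variables: component 0 = rho, 1,2 = m, 3 = E;  velocities: components 0,1. *)
type_synonym vfun = "nat \<Rightarrow> sfun"
type_synonym state = "nat \<Rightarrow> real"

record prm =
  kdeg :: nat
  nx :: nat
  ny :: nat
  hdiam :: real
  gam :: real
  Rey :: real
  lamb :: real
  epsl :: real
  dt :: real
  vth :: real
  sig :: real
  sigt :: real
  gx :: "real list"
  gw :: "real list"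
  lx :: "real list"
  lw :: "real list"
  ax :: "real list"
  aw :: "real list"

definition quad_nodes :: "nat \<Rightarrow> real list \<Rightarrow> real list \<Rightarrow> bool" where
  "quad_nodes n xs ws \<longleftrightarrow> length xs = n \<and> length ws = n \<and> sorted_wrt (<) xs \<and> set xs \<subseteq> {-1..1}"

(* n-point Gauss rule: n nodes, exact for all polynomials of degree <= 2n-1 (unique such rule) *)
definition gauss_rule :: "nat \<Rightarrow> real list \<Rightarrow> real list \<Rightarrow> bool" where
  "gauss_rule n xs ws \<longleftrightarrow> quad_nodes n xs ws \<and>
     (\<forall>d\<le>2*n-1. (\<Sum>i<n. ws!i * (xs!i)^d) = integral {-1..1} (\<lambda>x::real. x^d))"

definition gauss_lobatto_rule :: "nat \<Rightarrow> real list \<Rightarrow> real list \<Rightarrow> bool" where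
  "gauss_lobatto_rule n xs ws \<longleftrightarrow> n \<ge> 2 \<and> quad_nodes n xs ws \<and> xs!0 = -1 \<and> xs!(n-1) = 1 \<and>
     (\<forall>d\<le>2*n-3. (\<Sum>i<n. ws!i * (xs!i)^d) = integral {-1..1} (\<lambda>x::real. x^d))"

definition valid_params :: "prm \<Rightarrow> bool" where
  "valid_params P \<longleftrightarrow> kdeg P \<ge> 1 \<and> nx P \<ge> 1 \<and> ny P \<ge> 1 \<and> hdiam P > 0 \<and> gam P > 1 \<and>
     Rey P > 0 \<and> lamb P > 0 \<and> epsl P > 0 \<and> dt P > 0 \<and> 0 < vth P \<and> vth P \<le> 1 \<and>
     sig P \<ge> 0 \<and> sigt P > 0 \<and>
     gauss_rule (kdeg P + 1) (gx P) (gw P) \<and>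
     gauss_lobatto_rule (kdeg P + 1) (lx P) (lw P) \<and>
     gauss_lobatto_rule (length (ax P)) (ax P) (aw P) \<and> 2 * length (ax P) \<ge> kdeg P + 3"

(* side length of the square cells (diameter h = sqrt 2 * side) *)
definition side :: "prm \<Rightarrow> real" where "side P = hdiam P / sqrt 2"

definition cells :: "prm \<Rightarrow> cell set" where "cells P = {0..<nx P} \<times> {0..<ny P}"

(* periodic neighbour in positive / negative direction d (d=0: x, d=1: y) *)
definition nb :: "prm \<Rightarrow> nat \<Rightarrow> cell \<Rightarrow> cell" where
  "nb P d K = (case K of (i,j) \<Rightarrow>
     if d = 0 then ((i+1) mod nx P, j) else (i, (j+1) mod ny P))"
definition nbm :: "prm \<Rightarrow> nat \<Rightarrow> cell \<Rightarrow> cell" where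
  "nbm P d K = (case K of (i,j) \<Rightarrow>
     if d = 0 then ((i + nx P - 1) mod nx P, j) else (i, (j + ny P - 1) mod ny P))"

(* reference point on the face x_d = sg (sg = 1 or -1) with tangential parameter s *)
definition fpt :: "nat \<Rightarrow> real \<Rightarrow> real \<Rightarrow> real \<times> real" where
  "fpt d sg s = (if d = 0 then (sg, s) else (s, sg))"

definition ev :: "nat \<Rightarrow> poly2 \<Rightarrow> real \<Rightarrow> real \<Rightarrow> real" where
  "ev k c \<xi> \<eta> = (\<Sum>p\<le>k. \<Sum>q\<le>k. c p q * \<xi>^p * \<eta>^q)"
definition evx :: "nat \<Rightarrow> poly2 \<Rightarrow> real \<Rightarrow> real \<Rightarrow> real" where
  "evx k c \<xi> \<eta> = (\<Sum>p\<le>k. \<Sum>q\<le>k. c p q * real p * \<xi>^(p-1) * \<eta>^q)"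
definition evy :: "nat \<Rightarrow> poly2 \<Rightarrow> real \<Rightarrow> real \<Rightarrow> real" where
  "evy k c \<xi> \<eta> = (\<Sum>p\<le>k. \<Sum>q\<le>k. c p q * \<xi>^p * real q * \<eta>^(q-1))"

definition dref :: "prm \<Rightarrow> nat \<Rightarrow> poly2 \<Rightarrow> real \<Rightarrow> real \<Rightarrow> real" where
  "dref P d c \<xi> \<eta> = 2 / side P * (if d = 0 then evx (kdeg P) c \<xi> \<eta> else evy (kdeg P) c \<xi> \<eta>)"

definition pv :: "prm \<Rightarrow> sfun \<Rightarrow> cell \<Rightarrow> real \<Rightarrow> real \<Rightarrow> real" where
  "pv P v K \<xi> \<eta> = ev (kdeg P) (v K) \<xi> \<eta>"
definition pd :: "prm \<Rightarrow> nat \<Rightarrow> sfun \<Rightarrow> cell \<Rightarrow> real \<Rightarrow> real \<Rightarrow> real" where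
  "pd P d v K \<xi> \<eta> = dref P d (v K) \<xi> \<eta>"

definition st :: "prm \<Rightarrow> vfun \<Rightarrow> cell \<Rightarrow> real \<Rightarrow> real \<Rightarrow> state" where
  "st P U K \<xi> \<eta> = (\<lambda>c. pv P (U c) K \<xi> \<eta>)"

definition lc :: "real \<Rightarrow> vfun \<Rightarrow> real \<Rightarrow> vfun \<Rightarrow> vfun" where
  "lc a U b V = (\<lambda>c K p q. a * U c K p q + b * V c K p q)"
definition lcs :: "real \<Rightarrow> sfun \<Rightarrow> real \<Rightarrow> sfun \<Rightarrow> sfun" where
  "lcs a v b w = (\<lambda>K p q. a * v K p q + b * w K p q)"

definition qsum1 :: "real list \<Rightarrow> real list \<Rightarrow> (real \<Rightarrow> real) \<Rightarrow> real" where
  "qsum1 xs ws g = (\<Sum>j<length xs. ws!j * g (xs!j))"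
definition qsum2 :: "real list \<Rightarrow> real list \<Rightarrow> (real \<Rightarrow> real \<Rightarrow> real) \<Rightarrow> real" where
  "qsum2 xs ws f = (\<Sum>i<length xs. \<Sum>j<length xs. ws!i * ws!j * f (xs!i) (xs!j))"

definition gcell :: "prm \<Rightarrow> (real \<Rightarrow> real \<Rightarrow> real) \<Rightarrow> real" where
  "gcell P f = (side P)^2 / 4 * qsum2 (gx P) (gw P) f"

(* (v,1) with Gauss quadrature over Omega *)
definition gtotal :: "prm \<Rightarrow> sfun \<Rightarrow> real" where
  "gtotal P v = (\<Sum>K\<in>cells P. gcell P (pv P v K))"

definition avg :: "prm \<Rightarrow> sfun \<Rightarrow> cell \<Rightarrow> real" where
  "avg P v K = gcell P (pv P v K) / (side P)^2"

definition lvol :: "prm \<Rightarrow> (cell \<Rightarrow> real \<Rightarrow> real \<Rightarrow> real) \<Rightarrow> real" where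
  "lvol P F = (\<Sum>K\<in>cells P. (side P)^2 / 4 * qsum2 (lx P) (lw P) (F K))"

(* Gauss-Lobatto quadrature over the faces of Gamma_h orthogonal to e_d; each face is the
   positive-d face of exactly one cell K, with n_e = e_d pointing from K to nb d K *)
definition lface :: "prm \<Rightarrow> nat \<Rightarrow> (cell \<Rightarrow> real \<Rightarrow> real) \<Rightarrow> real" where
  "lface P d G = (\<Sum>K\<in>cells P. side P / 2 * qsum1 (lx P) (lw P) (G K))"

definition trm :: "(cell \<Rightarrow> real \<Rightarrow> real \<Rightarrow> real) \<Rightarrow> nat \<Rightarrow> cell \<Rightarrow> real \<Rightarrow> real" where
  "trm Q d K s = case_prod (Q K) (fpt d 1 s)"
definition trp :: "prm \<Rightarrow> (cell \<Rightarrow> real \<Rightarrow> real \<Rightarrow> real) \<Rightarrow> nat \<Rightarrow> cell \<Rightarrow> real \<Rightarrow> real" where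
  "trp P Q d K s = case_prod (Q (nb P d K)) (fpt d (-1) s)"
definition fjump :: "prm \<Rightarrow> nat \<Rightarrow> (cell \<Rightarrow> real \<Rightarrow> real \<Rightarrow> real) \<Rightarrow> cell \<Rightarrow> real \<Rightarrow> real" where
  "fjump P d Q K s = trm Q d K s - trp P Q d K s"
definition favg :: "prm \<Rightarrow> nat \<Rightarrow> (cell \<Rightarrow> real \<Rightarrow> real \<Rightarrow> real) \<Rightarrow> cell \<Rightarrow> real \<Rightarrow> real" where
  "favg P d Q K s = (trm Q d K s + trp P Q d K s) / 2"

definition strain :: "prm \<Rightarrow> vfun \<Rightarrow> nat \<Rightarrow> nat \<Rightarrow> cell \<Rightarrow> real \<Rightarrow> real \<Rightarrow> real" where
  "strain P u i j = (\<lambda>K \<xi> \<eta>. (pd P j (u i) K \<xi> \<eta> + pd P i (u j) K \<xi> \<eta>) / 2)"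
definition divg :: "prm \<Rightarrow> vfun \<Rightarrow> cell \<Rightarrow> real \<Rightarrow> real \<Rightarrow> real" where
  "divg P u = (\<lambda>K \<xi> \<eta>. pd P 0 (u 0) K \<xi> \<eta> + pd P 1 (u 1) K \<xi> \<eta>)"

definition a_eps :: "prm \<Rightarrow> vfun \<Rightarrow> vfun \<Rightarrow> real" where
  "a_eps P u th =
     2 * lvol P (\<lambda>K \<xi> \<eta>. \<Sum>i<2. \<Sum>j<2. strain P u i j K \<xi> \<eta> * strain P th i j K \<xi> \<eta>)
   - 2 * (\<Sum>d<2. lface P d (\<lambda>K s. \<Sum>i<2. favg P d (strain P u i d) K s * fjump P d (pv P (th i)) K s))
   + 2 * (\<Sum>d<2. lface P d (\<lambda>K s. \<Sum>i<2. favg P d (strain P th i d) K s * fjump P d (pv P (u i)) K s))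
   + sig P / hdiam P * (\<Sum>d<2. lface P d (\<lambda>K s. \<Sum>i<2. fjump P d (pv P (u i)) K s * fjump P d (pv P (th i)) K s))"

definition a_lam :: "prm \<Rightarrow> vfun \<Rightarrow> vfun \<Rightarrow> real" where
  "a_lam P u th =
     - lvol P (\<lambda>K \<xi> \<eta>. divg P u K \<xi> \<eta> * divg P th K \<xi> \<eta>)
   + (\<Sum>d<2. lface P d (\<lambda>K s. favg P d (divg P u) K s * fjump P d (pv P (th d)) K s))
   - (\<Sum>d<2. lface P d (\<lambda>K s. favg P d (divg P th) K s * fjump P d (pv P (u d)) K s))"

definition a_D :: "prm \<Rightarrow> sfun \<Rightarrow> sfun \<Rightarrow> real" where
  "a_D P e ch =
     lvol P (\<lambda>K \<xi> \<eta>. \<Sum>i<2. pd P i e K \<xi> \<eta> * pd P i ch K \<xi> \<eta>)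
   - (\<Sum>d<2. lface P d (\<lambda>K s. favg P d (pd P d e) K s * fjump P d (pv P ch) K s))
   + sigt P / hdiam P * (\<Sum>d<2. lface P d (\<lambda>K s. fjump P d (pv P e) K s * fjump P d (pv P ch) K s))"

definition b_eps :: "prm \<Rightarrow> vfun \<Rightarrow> sfun \<Rightarrow> real" where
  "b_eps P u ch =
     2 * lvol P (\<lambda>K \<xi> \<eta>. (\<Sum>i<2. \<Sum>j<2. strain P u i j K \<xi> \<eta> * strain P u i j K \<xi> \<eta>) * pv P ch K \<xi> \<eta>)
   + sig P / hdiam P * (\<Sum>d<2. lface P d (\<lambda>K s.
        (\<Sum>i<2. fjump P d (pv P (u i)) K s * fjump P d (pv P (u i)) K s) * favg P d (pv P ch) K s))"

definition b_lam :: "prm \<Rightarrow> vfun \<Rightarrow> sfun \<Rightarrow> real" where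
  "b_lam P u ch = - lvol P (\<lambda>K \<xi> \<eta>. (divg P u K \<xi> \<eta>)^2 * pv P ch K \<xi> \<eta>)"

definition inG :: "state \<Rightarrow> bool" where
  "inG w \<longleftrightarrow> w 0 > 0 \<and> w 3 - ((w 1)^2 + (w 2)^2) / (2 * w 0) > 0"
definition inGeps :: "prm \<Rightarrow> state \<Rightarrow> bool" where
  "inGeps P w \<longleftrightarrow> w 0 \<ge> epsl P \<and> w 3 - ((w 1)^2 + (w 2)^2) / (2 * w 0) \<ge> epsl P"

definition S_pts :: "prm \<Rightarrow> (real \<times> real) set" where
  "S_pts P = set (gx P) \<times> set (gx P) \<union> {-1, 1} \<times> set (gx P) \<union> set (gx P) \<times> {-1, 1}
            \<union> set (gx P) \<times> set (ax P) \<union> set (ax P) \<times> set (gx P)"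

definition GL_pts :: "prm \<Rightarrow> (real \<times> real) set" where
  "GL_pts P = set (lx P) \<times> set (lx P)"

definition zs_cell :: "prm \<Rightarrow> (real \<times> real) set \<Rightarrow> vfun \<Rightarrow> cell \<Rightarrow> nat \<Rightarrow> poly2" where
  "zs_cell P S U K = (let
      k = kdeg P;
      ub = (\<lambda>c. avg P (U c) K);
      rhob = ub 0;
      tr = min 1 ((rhob - epsl P) / (rhob - Min ((\<lambda>(\<xi>,\<eta>). ev k (U 0 K) \<xi> \<eta>) ` S)));
      rhohat = (\<lambda>p q. tr * U 0 K p q + (if p = 0 \<and> q = 0 then (1 - tr) * rhob else 0));
      Uhat = (\<lambda>c. if c = 0 then rhohat else U c K);
      reb = ub 3 - ((ub 1)^2 + (ub 2)^2) / (2 * rhob);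
      re = (\<lambda>(\<xi>,\<eta>). ev k (Uhat 3) \<xi> \<eta> - ((ev k (Uhat 1) \<xi> \<eta>)^2 + (ev k (Uhat 2) \<xi> \<eta>)^2)
                                         / (2 * ev k rhohat \<xi> \<eta>));
      te = min 1 ((reb - epsl P) / (reb - Min (re ` S)))
    in if inGeps P ub
       then (\<lambda>c p q. te * Uhat c p q + (if p = 0 \<and> q = 0 then (1 - te) * ub c else 0))
       else (\<lambda>c. U c K))"

definition zs :: "prm \<Rightarrow> (real \<times> real) set \<Rightarrow> vfun \<Rightarrow> vfun" where
  "zs P S U = (\<lambda>c K. zs_cell P S U K c)"

definition pres :: "prm \<Rightarrow> state \<Rightarrow> real" where
  "pres P w = (gam P - 1) * (w 3 - ((w 1)^2 + (w 2)^2) / (2 * w 0))"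

definition eflux :: "prm \<Rightarrow> state \<Rightarrow> nat \<Rightarrow> nat \<Rightarrow> real" where
  "eflux P w d c = (let ud = w (Suc d) / w 0; p = pres P w in
     if c = 0 then w (Suc d)
     else if c = 1 then w 1 * ud + (if d = 0 then p else 0)
     else if c = 2 then w 2 * ud + (if d = 1 then p else 0)
     else (w 3 + p) * ud)"

definition wspeed :: "prm \<Rightarrow> state \<Rightarrow> nat \<Rightarrow> real" where
  "wspeed P w d = \<bar>w (Suc d) / w 0\<bar> + sqrt (gam P * pres P w / w 0)"

definition alpha :: "prm \<Rightarrow> vfun \<Rightarrow> nat \<Rightarrow> cell \<Rightarrow> real" where
  "alpha P U d K = Max ((\<lambda>s. max (wspeed P (case_prod (st P U K) (fpt d 1 s)) d)
                                  (wspeed P (case_prod (st P U (nb P d K)) (fpt d (-1) s)) d)) ` set (gx P))"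

(* local Lax-Friedrichs flux, interior state wm, exterior state wp, n_K = sg * e_d *)
definition nflux :: "prm \<Rightarrow> state \<Rightarrow> state \<Rightarrow> real \<Rightarrow> nat \<Rightarrow> real \<Rightarrow> nat \<Rightarrow> real" where
  "nflux P wm wp sg d al c = (eflux P wm d c + eflux P wp d c) / 2 * sg - al / 2 * (wp c - wm c)"

(* V = L(U): the DG spatial operator (mass matrix relation, Gauss quadrature) *)
definition dg_rhs :: "prm \<Rightarrow> vfun \<Rightarrow> vfun \<Rightarrow> bool" where
  "dg_rhs P U V \<longleftrightarrow> (\<forall>K\<in>cells P. \<forall>\<Psi>::poly2. \<forall>c<4.
     gcell P (\<lambda>\<xi> \<eta>. pv P (V c) K \<xi> \<eta> * ev (kdeg P) \<Psi> \<xi> \<eta>) =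
       gcell P (\<lambda>\<xi> \<eta>. \<Sum>d<2. eflux P (st P U K \<xi> \<eta>) d c * dref P d \<Psi> \<xi> \<eta>)
     - (\<Sum>d<2. side P / 2 * qsum1 (gx P) (gw P) (\<lambda>s.
           nflux P (case_prod (st P U K) (fpt d 1 s)) (case_prod (st P U (nb P d K)) (fpt d (-1) s))
                 1 d (alpha P U d K) c * case_prod (ev (kdeg P) \<Psi>) (fpt d 1 s)
         + nflux P (case_prod (st P U K) (fpt d (-1) s)) (case_prod (st P U (nbm P d K)) (fpt d 1 s))
                 (-1) d (alpha P U d (nbm P d K)) c * case_prod (ev (kdeg P) \<Psi>) (fpt d (-1) s))))"

(* one SSP-RK3 step of size tau with the Zhang--Shu limiter on S_h after each stage *)
definition rk_step :: "prm \<Rightarrow> real \<Rightarrow> vfun \<Rightarrow> vfun \<Rightarrow> bool" where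
  "rk_step P \<tau> U U' \<longleftrightarrow> (\<exists>L0 L1 L2 U1 U2.
      dg_rhs P U L0 \<and> U1 = zs P (S_pts P) (lc 1 U \<tau> L0) \<and>
      dg_rhs P U1 L1 \<and> U2 = zs P (S_pts P) (lc (3/4) U (1/4) (lc 1 U1 \<tau> L1)) \<and>
      dg_rhs P U2 L2 \<and> U' = zs P (S_pts P) (lc (1/3) U (2/3) (lc 1 U2 \<tau> L2)))"

fun rk_chain :: "prm \<Rightarrow> real list \<Rightarrow> vfun \<Rightarrow> vfun \<Rightarrow> bool" where
  "rk_chain P [] U U' \<longleftrightarrow> U' = U"
| "rk_chain P (\<tau> # ts) U U' \<longleftrightarrow> (\<exists>V. rk_step P \<tau> U V \<and> rk_chain P ts V U')"

definition hyp_step :: "prm \<Rightarrow> real list \<Rightarrow> vfun \<Rightarrow> vfun \<Rightarrow> bool" where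
  "hyp_step P taus U U' \<longleftrightarrow> (\<forall>\<tau>\<in>set taus. \<tau> > 0) \<and> sum_list taus = dt P / 2 \<and> rk_chain P taus U U'"

definition recover :: "prm \<Rightarrow> vfun \<Rightarrow> vfun \<Rightarrow> sfun \<Rightarrow> bool" where
  "recover P U u e \<longleftrightarrow>
     (\<forall>th::vfun. lvol P (\<lambda>K \<xi> \<eta>. \<Sum>i<2. pv P (U (Suc i)) K \<xi> \<eta> * pv P (th i) K \<xi> \<eta>)
               = lvol P (\<lambda>K \<xi> \<eta>. \<Sum>i<2. pv P (U 0) K \<xi> \<eta> * pv P (u i) K \<xi> \<eta> * pv P (th i) K \<xi> \<eta>)) \<and>
     (\<forall>ch::sfun. lvol P (\<lambda>K \<xi> \<eta>. pv P (U 3) K \<xi> \<eta> * pv P ch K \<xi> \<eta>)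
               = lvol P (\<lambda>K \<xi> \<eta>. pv P (U 0) K \<xi> \<eta> * pv P e K \<xi> \<eta> * pv P ch K \<xi> \<eta>)
               + lvol P (\<lambda>K \<xi> \<eta>. \<Sum>i<2. pv P (U (Suc i)) K \<xi> \<eta> / (2 * pv P (U 0) K \<xi> \<eta>)
                                         * pv P (U (Suc i)) K \<xi> \<eta> * pv P ch K \<xi> \<eta>))"

definition visc_mom :: "prm \<Rightarrow> sfun \<Rightarrow> vfun \<Rightarrow> vfun \<Rightarrow> bool" where
  "visc_mom P rho uH ust \<longleftrightarrow> (\<forall>th::vfun.
      lvol P (\<lambda>K \<xi> \<eta>. \<Sum>i<2. pv P rho K \<xi> \<eta> * pv P (ust i) K \<xi> \<eta> * pv P (th i) K \<xi> \<eta>)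
      + dt P / (2 * Rey P) * a_eps P ust th + dt P / (3 * Rey P) * a_lam P ust th
      = lvol P (\<lambda>K \<xi> \<eta>. \<Sum>i<2. pv P rho K \<xi> \<eta> * pv P (uH i) K \<xi> \<eta> * pv P (th i) K \<xi> \<eta>))"

definition visc_en :: "prm \<Rightarrow> sfun \<Rightarrow> sfun \<Rightarrow> vfun \<Rightarrow> sfun \<Rightarrow> bool" where
  "visc_en P rho eH ust est \<longleftrightarrow> (\<forall>ch::sfun.
      lvol P (\<lambda>K \<xi> \<eta>. pv P rho K \<xi> \<eta> * pv P est K \<xi> \<eta> * pv P ch K \<xi> \<eta>)
      + vth P * dt P * lamb P / Rey P * a_D P est ch
      = lvol P (\<lambda>K \<xi> \<eta>. pv P rho K \<xi> \<eta> * pv P eH K \<xi> \<eta> * pv P ch K \<xi> \<eta>)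
      + vth P * dt P / Rey P * b_eps P ust ch + 2 * vth P * dt P / (3 * Rey P) * b_lam P ust ch)"

definition en_feasible :: "prm \<Rightarrow> vfun \<Rightarrow> cell set \<Rightarrow> (cell \<Rightarrow> real) \<Rightarrow> bool" where
  "en_feasible P U T F \<longleftrightarrow>
     (\<Sum>i\<in>T. F i * (side P)^2) = (\<Sum>i\<in>T. avg P (U 3) i * (side P)^2) \<and>
     (\<forall>i\<in>T. inGeps P (\<lambda>c. if c = 3 then F i else avg P (U c) i))"

definition en_min :: "prm \<Rightarrow> vfun \<Rightarrow> cell set \<Rightarrow> (cell \<Rightarrow> real) \<Rightarrow> bool" where
  "en_min P U T Es \<longleftrightarrow> en_feasible P U T Es \<and>
     (\<forall>F. en_feasible P U T F \<longrightarrow>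
        (\<Sum>i\<in>T. \<bar>Es i - avg P (U 3) i\<bar>^2) \<le> (\<Sum>i\<in>T. \<bar>F i - avg P (U 3) i\<bar>^2))"

definition energy_fix :: "prm \<Rightarrow> vfun \<Rightarrow> vfun \<Rightarrow> bool" where
  "energy_fix P U U' \<longleftrightarrow>
    (if \<forall>K\<in>cells P. inGeps P (\<lambda>c. avg P (U c) K) then U' = U
     else (\<exists>T Es. T \<subseteq> cells P \<and> en_min P U T Es \<and>
             U' = (\<lambda>c K. if c = 3 \<and> K \<in> T
                          then (\<lambda>p q. U 3 K p q + (if p = 0 \<and> q = 0 then Es K - avg P (U 3) K else 0))
                          else U c K)))"

end

theory Submission
  imports Defs "HOL-Computational_Algebra.Polynomial"
begin



lemma dsum: "(\<Sum>p\<le>(k::nat). \<Sum>q\<le>(k::nat). (if p = 0 \<and> q = 0 then f p q else 0)) = (f 0 0::real)"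
proof -
  have "\<And>p. (\<Sum>q\<le>k. (if p = 0 \<and> q = 0 then f p q else 0)) = (if p = 0 then f p 0 else 0)"
  proof -
    fix p
    have "(\<Sum>q\<le>k. (if p = 0 \<and> q = 0 then f p q else 0)) = (\<Sum>q\<le>k. (if q = 0 then (if p = 0 then f p q else 0) else 0))"
      by (rule sum.cong) auto
    also have "\<dots> = (if p = 0 then f p 0 else 0)" by (subst sum.delta) auto
    finally show "(\<Sum>q\<le>k. (if p = 0 \<and> q = 0 then f p q else 0)) = (if p = 0 then f p 0 else 0)" .
  qed
  then show ?thesis by (simp add: sum.delta)
qed

lemma ev_delta: "ev k (\<lambda>p q. if p = 0 \<and> q = 0 then a else 0) x y = a"
proof -
  have "ev k (\<lambda>p q. if p = 0 \<and> q = 0 then a else 0) x y = (\<Sum>p\<le>k. \<Sum>q\<le>k. (if p = 0 \<and> q = 0 then (\<lambda>p q. a * x^p * y^q) p q else 0))"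
    unfolding ev_def by (intro sum.cong) auto
  then show ?thesis by (simp only: dsum) simp
qed

lemma evx_delta: "evx k (\<lambda>p q. if p = 0 \<and> q = 0 then a else 0) x y = 0"
  unfolding evx_def by (rule sum.neutral, rule ballI, rule sum.neutral) auto
lemma evy_delta: "evy k (\<lambda>p q. if p = 0 \<and> q = 0 then a else 0) x y = 0"
  unfolding evy_def by (rule sum.neutral, rule ballI, rule sum.neutral) auto


lemma ev_lin: "ev k (\<lambda>p q. a * c1 p q + b * c2 p q) x y = a * ev k c1 x y + b * ev k c2 x y"
  unfolding ev_def by (simp add: sum_distrib_left sum.distrib algebra_simps)

lemma ev_shift: "ev k (\<lambda>p q. t * c p q + (if p = 0 \<and> q = 0 then a else 0)) x y = t * ev k c x y + a"
proof -
  have "ev k (\<lambda>p q. t * c p q + (if p = 0 \<and> q = 0 then a else 0)) x y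
      = ev k (\<lambda>p q. t * c p q + 1 * (if p = 0 \<and> q = 0 then a else 0)) x y" by simp
  also have "\<dots> = t * ev k c x y + 1 * ev k (\<lambda>p q. if p = 0 \<and> q = 0 then a else 0) x y"
    by (rule ev_lin)
  finally show ?thesis using ev_delta by simp
qed

lemma qsum2_lin: "qsum2 xs ws (\<lambda>x y. a * f x y + b * g x y) = a * qsum2 xs ws f + b * qsum2 xs ws g"
  unfolding qsum2_def by (simp add: sum_distrib_left sum.distrib algebra_simps)

lemma qsum2_sum: "qsum2 xs ws (\<lambda>x y. \<Sum>a\<in>A. f a x y) = (\<Sum>a\<in>A. qsum2 xs ws (f a))"
proof -
  let ?n = "length xs"
  have "qsum2 xs ws (\<lambda>x y. \<Sum>a\<in>A. f a x y) = (\<Sum>i<?n. \<Sum>j<?n. \<Sum>a\<in>A. ws!i * ws!j * f a (xs!i) (xs!j))"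
    unfolding qsum2_def by (simp only: sum_distrib_left)
  also have "\<dots> = (\<Sum>i<?n. \<Sum>a\<in>A. \<Sum>j<?n. ws!i * ws!j * f a (xs!i) (xs!j))"
    by (rule sum.cong[OF refl], rule sum.swap)
  also have "\<dots> = (\<Sum>a\<in>A. \<Sum>i<?n. \<Sum>j<?n. ws!i * ws!j * f a (xs!i) (xs!j))"
    by (rule sum.swap)
  finally show ?thesis unfolding qsum2_def .
qed

lemma qsum2_mono: "qsum2 xs ws (\<lambda>x y. c * x^p * y^q) = c * (\<Sum>i<length xs. ws!i * (xs!i)^p) * (\<Sum>j<length xs. ws!j * (xs!j)^q)"
  unfolding qsum2_def by (simp add: sum_distrib_left sum_distrib_right mult_ac)

lemma qsum2_ev:
  assumes "\<forall>d\<le>k. (\<Sum>i<length xs. ws!i * (xs!i)^d) = I d"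
  shows "qsum2 xs ws (ev k c) = (\<Sum>p\<le>k. \<Sum>q\<le>k. c p q * I p * I q)"
proof -
  have "qsum2 xs ws (ev k c) = qsum2 xs ws (\<lambda>x y. \<Sum>p\<le>k. \<Sum>q\<le>k. c p q * x^p * y^q)"
    unfolding ev_def ..
  also have "\<dots> = (\<Sum>p\<le>k. \<Sum>q\<le>k. qsum2 xs ws (\<lambda>x y. c p q * x^p * y^q))"
    by (simp only: qsum2_sum)
  also have "\<dots> = (\<Sum>p\<le>k. \<Sum>q\<le>k. c p q * I p * I q)"
    using assms by (simp only: qsum2_mono) (intro sum.cong refl, simp)
  finally show ?thesis .
qed

lemma nb1: "i < (n::nat) \<Longrightarrow> ((i + 1) mod n + n - 1) mod n = i"
proof (cases "i + 1 = n")
  case True then show ?thesis by simp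
next
  case False
  assume "i < n"
  then have "(i+1) mod n = i + 1" using False by simp
  then show ?thesis using \<open>i<n\<close> by simp
qed

lemma nb2: "i < (n::nat) \<Longrightarrow> ((i + n - 1) mod n + 1) mod n = i"
proof (cases "i = 0")
  case True
  assume "i < n"
  then show ?thesis using True by (simp add: Suc_diff_1)
next
  case False
  assume "i < n"
  then have "(i + n - 1) mod n = i - 1" using False
    by (metis Nat.add_diff_assoc2 add.commute less_imp_diff_less linorder_not_less mod_add_self2 mod_less not_gr0 not_less_zero Suc_leI le_add2 One_nat_def)
  then show ?thesis using \<open>i<n\<close> False by simp
qed

lemma nb1': "i < (n::nat) \<Longrightarrow> (Suc i mod n + n - Suc 0) mod n = i"
  using nb1 by simp
lemma nb2': "i < (n::nat) \<Longrightarrow> Suc ((i + n - Suc 0) mod n) mod n = i"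
  using nb2 by simp

lemma cells_nb:
  assumes "nx P \<ge> 1" "ny P \<ge> 1" "K \<in> cells P"
  shows "nb P d K \<in> cells P" "nbm P d K \<in> cells P" "nbm P d (nb P d K) = K" "nb P d (nbm P d K) = K"
  using assms by (auto simp: cells_def nb_def nbm_def nb1' nb2' split: prod.splits)




abbreviation "II d \<equiv> integral {-1..1} (\<lambda>x::real. x^d)"

lemma gauss_ex:
  assumes "valid_params P"
  shows "\<forall>d\<le>kdeg P. (\<Sum>i<length (gx P). gw P!i * (gx P!i)^d) = II d"
  using assms unfolding valid_params_def gauss_rule_def quad_nodes_def by auto

lemma lob_ex:
  assumes "valid_params P"
  shows "\<forall>d\<le>kdeg P. (\<Sum>i<length (lx P). lw P!i * (lx P!i)^d) = II d"
proof -
  from assms have k: "kdeg P \<ge> 1" and r: "gauss_lobatto_rule (kdeg P + 1) (lx P) (lw P)"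
    unfolding valid_params_def by auto
  from r have l: "length (lx P) = kdeg P + 1" and
    e: "\<forall>d\<le>2*(kdeg P + 1)-3. (\<Sum>i<kdeg P + 1. lw P!i * (lx P!i)^d) = II d"
    unfolding gauss_lobatto_rule_def quad_nodes_def by auto
  show ?thesis using k e l by auto
qed

lemma pv_fun: "pv P v K = ev (kdeg P) (v K)"
  by (intro ext) (simp add: pv_def)

lemma side_pos: "valid_params P \<Longrightarrow> side P > 0"
  unfolding valid_params_def side_def by auto

lemma gcell_ev: "valid_params P \<Longrightarrow>
  gcell P (ev (kdeg P) c) = (side P)^2 / 4 * (\<Sum>p\<le>kdeg P. \<Sum>q\<le>kdeg P. c p q * II p * II q)"
  unfolding gcell_def using qsum2_ev[OF gauss_ex] by simp

lemma lcell_ev: "valid_params P \<Longrightarrow>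
  (side P)^2 / 4 * qsum2 (lx P) (lw P) (ev (kdeg P) c) = (side P)^2 / 4 * (\<Sum>p\<le>kdeg P. \<Sum>q\<le>kdeg P. c p q * II p * II q)"
  using qsum2_ev[OF lob_ex] by simp

lemma gtotal_lvol: "valid_params P \<Longrightarrow> gtotal P v = lvol P (pv P v)"
  unfolding gtotal_def lvol_def pv_fun gcell_def
  by (intro sum.cong refl) (simp only: qsum2_ev[OF gauss_ex] qsum2_ev[OF lob_ex])

lemma gcell_lin: "gcell P (\<lambda>x y. a * f x y + b * g x y) = a * gcell P f + b * gcell P g"
  unfolding gcell_def qsum2_lin by (simp add: algebra_simps)

lemma gcell_one: "valid_params P \<Longrightarrow> gcell P (\<lambda>x y. 1) = (side P)^2"
proof -
  assume v: "valid_params P"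
  have "(\<lambda>x y. 1::real) = ev (kdeg P) (\<lambda>p q. if p = 0 \<and> q = 0 then 1 else 0)"
    by (intro ext) (simp add: ev_delta)
  then have "gcell P (\<lambda>x y. 1) = (side P)^2 / 4 * (\<Sum>p\<le>kdeg P. \<Sum>q\<le>kdeg P. (if p = 0 \<and> q = 0 then 1 else 0) * II p * II q)"
    using gcell_ev[OF v] by simp
  also have "\<dots> = (side P)^2 / 4 * (\<Sum>p\<le>kdeg P. \<Sum>q\<le>kdeg P. (if p = 0 \<and> q = 0 then (\<lambda>p q. II p * II q) p q else 0))"
    by (intro arg_cong2[where f="(*)"] sum.cong refl) auto
  also have "\<dots> = (side P)^2" by (simp only: dsum) simp
  finally show ?thesis .
qed

lemma gcell_shift: "valid_params P \<Longrightarrow>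
  gcell P (ev (kdeg P) (\<lambda>p q. t * w p q + (if p = 0 \<and> q = 0 then a else 0))) = t * gcell P (ev (kdeg P) w) + a * (side P)^2"
proof -
  assume v: "valid_params P"
  have "ev (kdeg P) (\<lambda>p q. t * w p q + (if p = 0 \<and> q = 0 then a else 0)) = (\<lambda>x y. t * ev (kdeg P) w x y + a * 1)"
    by (intro ext) (simp add: ev_shift)
  then have "gcell P (ev (kdeg P) (\<lambda>p q. t * w p q + (if p = 0 \<and> q = 0 then a else 0)))
     = gcell P (\<lambda>x y. t * ev (kdeg P) w x y + a * 1)"
    by simp
  also have "\<dots> = t * gcell P (ev (kdeg P) w) + a * (side P)^2"
    by (subst gcell_lin) (simp add: gcell_one[OF v])
  finally show ?thesis .
qed

lemma zs_gcell:
  assumes v: "valid_params P"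
  shows "gcell P (pv P (zs P S U c) K) = gcell P (pv P (U c) K)"
proof -
  define rhob where "rhob = avg P (U 0) K"
  define tr where "tr = min 1 ((rhob - epsl P) / (rhob - Min ((\<lambda>(\<xi>,\<eta>). ev (kdeg P) (U 0 K) \<xi> \<eta>) ` S)))"
  define rhohat where "rhohat = (\<lambda>p q. tr * U 0 K p q + (if p = 0 \<and> q = 0 then (1 - tr) * rhob else 0))"
  define Uhat where "Uhat = (\<lambda>c. if c = 0 then rhohat else U c K)"
  define ub where "ub = (\<lambda>c. avg P (U c) K)"
  define reb where "reb = ub 3 - ((ub 1)^2 + (ub 2)^2) / (2 * rhob)"
  define re where "re = (\<lambda>(\<xi>,\<eta>). ev (kdeg P) (Uhat 3) \<xi> \<eta> - ((ev (kdeg P) (Uhat 1) \<xi> \<eta>)^2 + (ev (kdeg P) (Uhat 2) \<xi> \<eta>)^2)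
                                         / (2 * ev (kdeg P) rhohat \<xi> \<eta>))"
  define te where "te = min 1 ((reb - epsl P) / (reb - Min (re ` S)))"
  have eq: "zs P S U c K = (if inGeps P (\<lambda>c. avg P (U c) K) then (\<lambda>p q. te * (if c = 0 then (\<lambda>p q. tr * U 0 K p q + (if p = 0 \<and> q = 0 then (1 - tr) * avg P (U 0) K else 0)) else U c K) p q + (if p = 0 \<and> q = 0 then (1 - te) * avg P (U c) K else 0)) else U c K)"
    unfolding zs_def zs_cell_def Let_def te_def re_def reb_def ub_def Uhat_def rhohat_def tr_def rhob_def
    by (cases "inGeps P (\<lambda>c. avg P (U c) K)") (simp_all only: if_True if_False)
  have s: "(side P)^2 \<noteq> 0" using side_pos[OF v] by simp
  have av: "avg P (U c') K * (side P)^2 = gcell P (pv P (U c') K)" for c'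
    unfolding avg_def using s by simp
  have h0: "gcell P (ev (kdeg P) (\<lambda>p q. tr * U 0 K p q + (if p = 0 \<and> q = 0 then (1 - tr) * avg P (U 0) K else 0))) = gcell P (pv P (U 0) K)"
    using gcell_shift[OF v] av[of 0] by (simp add: pv_fun algebra_simps)
  show ?thesis
  proof (cases "inGeps P (\<lambda>c. avg P (U c) K)")
    case False then show ?thesis by (simp add: eq pv_fun)
  next
    case True
    note T = this
    define Uh where "Uh = (if c = 0 then (\<lambda>p q. tr * U 0 K p q + (if p = 0 \<and> q = 0 then (1 - tr) * avg P (U 0) K else 0)) else U c K)"
    have zeq: "zs P S U c K = (\<lambda>p q. te * Uh p q + (if p = 0 \<and> q = 0 then (1 - te) * avg P (U c) K else 0))"
      unfolding Uh_def by (simp only: eq T if_True)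
    have "gcell P (pv P (zs P S U c) K) = te * gcell P (ev (kdeg P) Uh) + (1 - te) * avg P (U c) K * (side P)^2"
      unfolding pv_fun zeq by (rule gcell_shift[OF v])
    also have "\<dots> = te * gcell P (ev (kdeg P) (if c = 0 then (\<lambda>p q. tr * U 0 K p q + (if p = 0 \<and> q = 0 then (1 - tr) * avg P (U 0) K else 0)) else U c K)) + (1 - te) * avg P (U c) K * (side P)^2"
      unfolding Uh_def ..
    also have "\<dots> = gcell P (pv P (U c) K)"
      using h0 av[of c] by (cases "c = 0") (simp_all add: pv_fun algebra_simps)
    finally show ?thesis .
  qed
qed

lemma zs_total: "valid_params P \<Longrightarrow> gtotal P (zs P S U c) = gtotal P (U c)"
  unfolding gtotal_def using zs_gcell by simp

lemma pv_lc: "pv P (lc a U b V c) K x y = a * pv P (U c) K x y + b * pv P (V c) K x y"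
  unfolding pv_def lc_def by (rule ev_lin)

lemma pv_lcs: "pv P (lcs a U b V) K x y = a * pv P U K x y + b * pv P V K x y"
  unfolding pv_def lcs_def by (rule ev_lin)

lemma lc_total: "gtotal P (lc a U b V c) = a * gtotal P (U c) + b * gtotal P (V c)"
proof -
  have "gcell P (pv P (lc a U b V c) K) = a * gcell P (pv P (U c) K) + b * gcell P (pv P (V c) K)" for K
  proof -
    have "pv P (lc a U b V c) K = (\<lambda>x y. a * pv P (U c) K x y + b * pv P (V c) K x y)"
      by (intro ext) (simp add: pv_lc)
    then show ?thesis by (simp add: gcell_lin)
  qed
  then show ?thesis unfolding gtotal_def by (simp add: sum.distrib sum_distrib_left)
qed




lemma gcell_zero: "gcell P (\<lambda>x y. 0) = 0"
  unfolding gcell_def qsum2_def by simp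

lemma qsum1_sum: "(\<Sum>K\<in>C. qsum1 xs ws (f K)) = qsum1 xs ws (\<lambda>s. \<Sum>K\<in>C. f K s)"
  unfolding qsum1_def by (simp add: sum_distrib_left sum.swap[of _ C])

lemma dg_total:
  assumes v: "valid_params P" and dg: "dg_rhs P U V" and c: "c < 4"
  shows "gtotal P (V c) = 0"
proof -
  define A where "A K d s = nflux P (case_prod (st P U K) (fpt d 1 s)) (case_prod (st P U (nb P d K)) (fpt d (-1) s)) 1 d (alpha P U d K) c" for K d s
  define B where "B K d s = nflux P (case_prod (st P U K) (fpt d (-1) s)) (case_prod (st P U (nbm P d K)) (fpt d 1 s)) (-1) d (alpha P U d (nbm P d K)) c" for K d s
  have nxy: "nx P \<ge> 1" "ny P \<ge> 1" using v unfolding valid_params_def by auto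
  have cellK: "gcell P (pv P (V c) K) = - (\<Sum>d<2. side P / 2 * qsum1 (gx P) (gw P) (\<lambda>s. A K d s + B K d s))"
    if K: "K \<in> cells P" for K
  proof -
    have "gcell P (\<lambda>\<xi> \<eta>. pv P (V c) K \<xi> \<eta> * ev (kdeg P) (\<lambda>p q. if p = 0 \<and> q = 0 then 1 else 0) \<xi> \<eta>) =
       gcell P (\<lambda>\<xi> \<eta>. \<Sum>d<2. eflux P (st P U K \<xi> \<eta>) d c * dref P d (\<lambda>p q. if p = 0 \<and> q = 0 then 1 else 0) \<xi> \<eta>)
     - (\<Sum>d<2. side P / 2 * qsum1 (gx P) (gw P) (\<lambda>s.
           nflux P (case_prod (st P U K) (fpt d 1 s)) (case_prod (st P U (nb P d K)) (fpt d (-1) s))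
                 1 d (alpha P U d K) c * case_prod (ev (kdeg P) (\<lambda>p q. if p = 0 \<and> q = 0 then 1 else 0)) (fpt d 1 s)
         + nflux P (case_prod (st P U K) (fpt d (-1) s)) (case_prod (st P U (nbm P d K)) (fpt d 1 s))
                 (-1) d (alpha P U d (nbm P d K)) c * case_prod (ev (kdeg P) (\<lambda>p q. if p = 0 \<and> q = 0 then 1 else 0)) (fpt d (-1) s)))"
      using dg K c unfolding dg_rhs_def by blast
    moreover have "dref P d (\<lambda>p q. if p = 0 \<and> q = 0 then 1 else 0) x y = 0" for d x y
      unfolding dref_def using evx_delta evy_delta by simp
    ultimately show ?thesis
      by (simp add: ev_delta evx_delta evy_delta prod.case_eq_if gcell_zero A_def B_def)
  qed
  have BA: "(\<Sum>K\<in>cells P. B K d s) = - (\<Sum>K\<in>cells P. A K d s)" for d s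
  proof -
    have "(\<Sum>K\<in>cells P. B K d s) = (\<Sum>K\<in>cells P. B (nb P d K) d s)"
      by (rule sum.reindex_bij_witness[where i = "nb P d" and j = "nbm P d"])
         (use cells_nb[OF nxy] in auto)
    also have "\<dots> = (\<Sum>K\<in>cells P. - A K d s)"
    proof (rule sum.cong[OF refl])
      fix K assume K: "K \<in> cells P"
      have e: "nbm P d (nb P d K) = K" using cells_nb[OF nxy K] by simp
      show "B (nb P d K) d s = - A K d s"
        unfolding A_def B_def nflux_def e by (simp add: field_simps)
    qed
    finally show ?thesis by (simp add: sum_negf)
  qed
  have "gtotal P (V c) = (\<Sum>K\<in>cells P. - (\<Sum>d<2. side P / 2 * qsum1 (gx P) (gw P) (\<lambda>s. A K d s + B K d s)))"
    unfolding gtotal_def by (rule sum.cong) (auto simp: cellK)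
  also have "\<dots> = - (\<Sum>d<2. side P / 2 * (\<Sum>K\<in>cells P. qsum1 (gx P) (gw P) (\<lambda>s. A K d s + B K d s)))"
    by (simp add: sum_negf sum.swap[of _ "cells P"] sum_distrib_left)
  also have "\<dots> = - (\<Sum>d<2. side P / 2 * qsum1 (gx P) (gw P) (\<lambda>s. (\<Sum>K\<in>cells P. A K d s) + (\<Sum>K\<in>cells P. B K d s)))"
    by (simp add: qsum1_sum sum.distrib)
  also have "\<dots> = 0" by (simp add: BA qsum1_def)
  finally show ?thesis .
qed

lemma rk_step_total:
  assumes v: "valid_params P" and r: "rk_step P \<tau> U U'" and c: "c < 4"
  shows "gtotal P (U' c) = gtotal P (U c)"
proof -
  obtain L0 L1 L2 U1 U2 where
    h: "dg_rhs P U L0" "U1 = zs P (S_pts P) (lc 1 U \<tau> L0)"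
      "dg_rhs P U1 L1" "U2 = zs P (S_pts P) (lc (3/4) U (1/4) (lc 1 U1 \<tau> L1))"
      "dg_rhs P U2 L2" "U' = zs P (S_pts P) (lc (1/3) U (2/3) (lc 1 U2 \<tau> L2))"
    using r unfolding rk_step_def by blast
  have 1: "gtotal P (U1 c) = gtotal P (U c)"
    using h(1,2) by (simp add: zs_total[OF v] lc_total dg_total[OF v _ c])
  have 2: "gtotal P (U2 c) = gtotal P (U c)"
    using h(3,4) 1 by (simp add: zs_total[OF v] lc_total dg_total[OF v _ c])
  show ?thesis
    using h(5,6) 2 by (simp add: zs_total[OF v] lc_total dg_total[OF v _ c])
qed

lemma rk_chain_total:
  assumes v: "valid_params P" and c: "c < 4"
  shows "rk_chain P ts U U' \<Longrightarrow> gtotal P (U' c) = gtotal P (U c)"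
proof (induction ts arbitrary: U)
  case Nil then show ?case by simp
next
  case (Cons t ts)
  then obtain V where "rk_step P t U V" "rk_chain P ts V U'" by auto
  then show ?case using Cons.IH rk_step_total[OF v _ c] by metis
qed

lemma hyp_total:
  "valid_params P \<Longrightarrow> hyp_step P ts U U' \<Longrightarrow> c < 4 \<Longrightarrow> gtotal P (U' c) = gtotal P (U c)"
  unfolding hyp_step_def using rk_chain_total by blast




lemma poly_sum_k:
  fixes L :: "real poly"
  assumes "degree L \<le> k"
  shows "poly L x = (\<Sum>i\<le>k. coeff L i * x ^ i)"
  unfolding poly_altdef
  by (rule sum.mono_neutral_left) (use assms in \<open>auto simp: coeff_eq_0\<close>)

lemma ev_poly:
  fixes L1 L2 :: "real poly"
  assumes "degree L1 \<le> k" "degree L2 \<le> k"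
  shows "ev k (\<lambda>p q. coeff L1 p * coeff L2 q) x y = poly L1 x * poly L2 y"
proof -
  have "poly L1 x * poly L2 y = (\<Sum>p\<le>k. \<Sum>q\<le>k. (coeff L1 p * x ^ p) * (coeff L2 q * y ^ q))"
    unfolding poly_sum_k[OF assms(1)] poly_sum_k[OF assms(2)] by (rule sum_product)
  then show ?thesis unfolding ev_def by (simp add: mult_ac)
qed

lemma ev_sum: "ev k (\<lambda>p q. \<Sum>a\<in>A. h a p q) x y = (\<Sum>a\<in>A. ev k (h a) x y)"
  unfolding ev_def by (simp add: sum_distrib_right sum.swap[of _ A])

lemma ev_cmult: "ev k (\<lambda>p q. t * h p q) x y = t * ev k h x y"
  unfolding ev_def by (simp add: sum_distrib_left mult_ac)

lemma lagrange1:
  assumes d: "distinct xs" and a: "a < length xs"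
  shows "\<exists>L::real poly. degree L \<le> length xs - 1 \<and> (\<forall>b<length xs. poly L (xs!b) = (if b = a then 1 else 0))"
proof -
  let ?n = "length xs"
  let ?S = "{..<?n} - {a}"
  define L where "L = smult (1 / (\<Prod>b\<in>?S. (xs!a - xs!b))) (\<Prod>b\<in>?S. [:-(xs!b), 1:])"
  have "degree (\<Prod>b\<in>?S. [:-(xs!b), 1:]) \<le> sum (degree \<circ> (\<lambda>b. [:-(xs!b), 1:])) ?S"
    by (rule degree_prod_sum_le) simp
  also have "\<dots> = card ?S" by simp
  also have "\<dots> = ?n - 1" using a by simp
  finally have deg: "degree L \<le> ?n - 1" unfolding L_def
    using degree_smult_le order_trans by blast
  have ev: "poly L y = (\<Prod>b\<in>?S. (y - xs!b)) / (\<Prod>b\<in>?S. (xs!a - xs!b))" for y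
    unfolding L_def by (simp add: poly_prod)
  have nz: "(\<Prod>b\<in>?S. (xs!a - xs!b)) \<noteq> 0"
    using d a by (auto simp: nth_eq_iff_index_eq)
  have "poly L (xs!b) = (if b = a then 1 else 0)" if b: "b < ?n" for b
  proof (cases "b = a")
    case True then show ?thesis using ev nz by simp
  next
    case False
    then have "b \<in> ?S" using b by simp
    then have "(\<Prod>b'\<in>?S. (xs!b - xs!b')) = 0"
      by (intro prod_zero) auto
    then show ?thesis using ev False by simp
  qed
  then show ?thesis using deg by blast
qed

lemma interp2:
  assumes d: "distinct xs" and n: "length xs = k + 1"
  shows "\<exists>c. \<forall>a<k+1. \<forall>b<k+1. ev k c (xs!a) (xs!b) = f a b"
proof -
  have "\<forall>a. \<exists>L::real poly. a < k + 1 \<longrightarrow> degree L \<le> k \<and> (\<forall>b<k+1. poly L (xs!b) = (if b = a then 1 else 0))"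
    using lagrange1[OF d] n by fastforce
  then obtain L where L: "\<And>a. a < k + 1 \<Longrightarrow> degree (L a) \<le> k \<and> (\<forall>b<k+1. poly (L a) (xs!b) = (if b = a then 1 else 0))"
    by metis
  define c where "c = (\<lambda>p q. \<Sum>a<k+1. \<Sum>b<k+1. f a b * (coeff (L a) p * coeff (L b) q))"
  have "ev k c x y = (\<Sum>a<k+1. \<Sum>b<k+1. f a b * (poly (L a) x * poly (L b) y))" for x y
  proof -
    have "ev k c x y = (\<Sum>a<k+1. \<Sum>b<k+1. f a b * ev k (\<lambda>p q. coeff (L a) p * coeff (L b) q) x y)"
      unfolding c_def by (simp only: ev_sum ev_cmult)
    also have "\<dots> = (\<Sum>a<k+1. \<Sum>b<k+1. f a b * (poly (L a) x * poly (L b) y))"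
      by (intro sum.cong refl) (simp add: ev_poly L)
    finally show ?thesis .
  qed
  note evc = this
  have P: "poly (L a) (xs!b) = (if b = a then 1 else 0)" if "a<k+1" "b<k+1" for a b
    using L that by blast
  have "ev k c (xs!a0) (xs!b0) = f a0 b0" if ab: "a0 < k+1" "b0 < k+1" for a0 b0
  proof -
    have "ev k c (xs!a0) (xs!b0) = (\<Sum>a<k+1. \<Sum>b<k+1. (if a = a0 then (if b = b0 then f a b else 0) else 0))"
      unfolding evc
    proof (intro sum.cong refl)
      fix a b assume a: "a \<in> {..<k+1}" and b: "b \<in> {..<k+1}"
      have "poly (L a) (xs!a0) = (if a0 = a then 1 else 0)" using P a ab by simp
      moreover have "poly (L b) (xs!b0) = (if b0 = b then 1 else 0)" using P b ab by simp
      ultimately show "f a b * (poly (L a) (xs ! a0) * poly (L b) (xs ! b0)) = (if a = a0 then (if b = b0 then f a b else 0) else 0)"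
        by auto
    qed
    also have "\<dots> = (\<Sum>a<k+1. (if a = a0 then f a b0 else 0))"
      by (intro sum.cong refl) (insert ab, auto)
    also have "\<dots> = f a0 b0" using ab by simp
    finally show ?thesis .
  qed
  then show ?thesis by blast
qed




lemma sum2: "(\<Sum>i<(2::nat). f i) = f 0 + (f 1::real)"
  by (simp add: numeral_2_eq_2)

lemma lvol_lin: "lvol P (\<lambda>K x y. a * F K x y + b * G K x y) = a * lvol P F + b * lvol P G"
  unfolding lvol_def qsum2_def
  by (simp add: sum_distrib_left sum.distrib algebra_simps)

lemma lvol_cong_w:
  assumes "\<And>K i j. K \<in> cells P \<Longrightarrow> i < length (lx P) \<Longrightarrow> j < length (lx P) \<Longrightarrow>
     lw P!i * lw P!j * F K (lx P!i) (lx P!j) = lw P!i * lw P!j * G K (lx P!i) (lx P!j)"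
  shows "lvol P F = lvol P G"
  unfolding lvol_def qsum2_def
proof (rule sum.cong[OF refl])
  fix K assume K: "K \<in> cells P"
  have "(\<Sum>i<length (lx P). \<Sum>j<length (lx P). lw P ! i * lw P ! j * F K (lx P ! i) (lx P ! j))
      = (\<Sum>i<length (lx P). \<Sum>j<length (lx P). lw P ! i * lw P ! j * G K (lx P ! i) (lx P ! j))"
    by (rule sum.cong[OF refl], rule sum.cong[OF refl]) (simp add: assms K)
  then show "(side P)\<^sup>2 / 4 * (\<Sum>i<length (lx P). \<Sum>j<length (lx P). lw P ! i * lw P ! j * F K (lx P ! i) (lx P ! j)) =
         (side P)\<^sup>2 / 4 * (\<Sum>i<length (lx P). \<Sum>j<length (lx P). lw P ! i * lw P ! j * G K (lx P ! i) (lx P ! j))"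
    by simp
qed

lemma lvol_zero: "lvol P (\<lambda>K x y. 0) = 0"
  unfolding lvol_def qsum2_def by simp
lemma lface_zero: "lface P d (\<lambda>K s. 0) = 0"
  unfolding lface_def qsum1_def by simp

lemma lx_distinct: "valid_params P \<Longrightarrow> distinct (lx P)"
  unfolding valid_params_def gauss_lobatto_rule_def quad_nodes_def strict_sorted_iff by auto
lemma lx_len: "valid_params P \<Longrightarrow> length (lx P) = kdeg P + 1"
  unfolding valid_params_def gauss_lobatto_rule_def quad_nodes_def by auto

definition one_s :: sfun where "one_s = (\<lambda>K p q. if p = 0 \<and> q = 0 then 1 else 0)"
definition zero_s :: sfun where "zero_s = (\<lambda>K p q. 0)"

lemma pv_one[simp]: "pv P one_s K x y = 1"
  unfolding pv_def one_s_def by (rule ev_delta)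
lemma pv_zero[simp]: "pv P zero_s K x y = 0"
  unfolding pv_def zero_s_def ev_def by simp
lemma pd_one[simp]: "pd P d one_s K x y = 0"
  unfolding pd_def dref_def one_s_def using evx_delta evy_delta by simp
lemma pd_zero[simp]: "pd P d zero_s K x y = 0"
  unfolding pd_def dref_def zero_s_def evx_def evy_def by simp

lemma recover_pt:
  assumes v: "valid_params P" and r: "recover P U u e" and c: "c < 2" and K0: "K0 \<in> cells P"
    and i0: "i0 < length (lx P)" and j0: "j0 < length (lx P)"
  shows "lw P!i0 * lw P!j0 * (pv P (U (Suc c)) K0 (lx P!i0) (lx P!j0) - pv P (U 0) K0 (lx P!i0) (lx P!j0) * pv P (u c) K0 (lx P!i0) (lx P!j0)) = 0"
proof -
  let ?k = "kdeg P"
  let ?n = "length (lx P)"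
  define W where "W i j = lw P!i * lw P!j" for i j
  define g where "g K x y = pv P (U (Suc c)) K x y - pv P (U 0) K x y * pv P (u c) K x y" for K x y
  have n: "?n = ?k + 1" using lx_len[OF v] .
  have ex: "\<forall>K. \<exists>cf. \<forall>a<?k+1. \<forall>b<?k+1. ev ?k cf (lx P!a) (lx P!b) = W a b * g K (lx P!a) (lx P!b)"
  proof
    fix K
    show "\<exists>cf. \<forall>a<?k+1. \<forall>b<?k+1. ev ?k cf (lx P!a) (lx P!b) = W a b * g K (lx P!a) (lx P!b)"
      using interp2[OF lx_distinct[OF v] n, of "\<lambda>a b. W a b * g K (lx P!a) (lx P!b)"] by simp
  qed
  obtain Th where Th0: "\<forall>K. \<forall>a<?k+1. \<forall>b<?k+1. ev ?k (Th K) (lx P!a) (lx P!b) = W a b * g K (lx P!a) (lx P!b)"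
    using choice[OF ex] by blast
  have Th: "ev ?k (Th K) (lx P!a) (lx P!b) = W a b * g K (lx P!a) (lx P!b)" if "a < ?k+1" "b < ?k+1" for K a b
    using Th0 that by blast
  define th where "th = (\<lambda>i. if i = c then Th else zero_s)"
  have s1: "(\<Sum>i<2. F i * pv P (th i) K x y) = F c * pv P Th K x y" for F K x y
    using c unfolding th_def by (cases c) (auto simp: sum2)
  from r have "lvol P (\<lambda>K \<xi> \<eta>. \<Sum>i<2. pv P (U (Suc i)) K \<xi> \<eta> * pv P (th i) K \<xi> \<eta>)
               = lvol P (\<lambda>K \<xi> \<eta>. \<Sum>i<2. pv P (U 0) K \<xi> \<eta> * pv P (u i) K \<xi> \<eta> * pv P (th i) K \<xi> \<eta>)"
    unfolding recover_def by blast
  then have "lvol P (\<lambda>K \<xi> \<eta>. pv P (U (Suc c)) K \<xi> \<eta> * pv P Th K \<xi> \<eta>)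
               = lvol P (\<lambda>K \<xi> \<eta>. (pv P (U 0) K \<xi> \<eta> * pv P (u c) K \<xi> \<eta>) * pv P Th K \<xi> \<eta>)"
    by (simp only: s1)
  then have "lvol P (\<lambda>K \<xi> \<eta>. 1 * (pv P (U (Suc c)) K \<xi> \<eta> * pv P Th K \<xi> \<eta>) + (-1) * ((pv P (U 0) K \<xi> \<eta> * pv P (u c) K \<xi> \<eta>) * pv P Th K \<xi> \<eta>)) = 0"
    by (simp only: lvol_lin)
  then have "lvol P (\<lambda>K \<xi> \<eta>. g K \<xi> \<eta> * pv P Th K \<xi> \<eta>) = 0"
    unfolding g_def by (simp add: algebra_simps)
  moreover have "lvol P (\<lambda>K \<xi> \<eta>. g K \<xi> \<eta> * pv P Th K \<xi> \<eta>) =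
      (\<Sum>K\<in>cells P. (side P)^2 / 4 * (\<Sum>i<?n. \<Sum>j<?n. (W i j * g K (lx P!i) (lx P!j))^2))"
    unfolding lvol_def qsum2_def
  proof (rule sum.cong[OF refl])
    fix K assume K: "K \<in> cells P"
    have "(\<Sum>i<?n. \<Sum>j<?n. lw P ! i * lw P ! j * (g K (lx P ! i) (lx P ! j) * pv P Th K (lx P ! i) (lx P ! j)))
       = (\<Sum>i<?n. \<Sum>j<?n. (W i j * g K (lx P!i) (lx P!j))^2)"
    proof (rule sum.cong[OF refl], rule sum.cong[OF refl])
      fix i j assume "i \<in> {..<?n}" "j \<in> {..<?n}"
      then have "i < ?k + 1" "j < ?k + 1" using n by auto
      then have "pv P Th K (lx P ! i) (lx P ! j) = W i j * g K (lx P!i) (lx P!j)"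
        unfolding pv_fun by (rule Th)
      then show "lw P ! i * lw P ! j * (g K (lx P ! i) (lx P ! j) * pv P Th K (lx P ! i) (lx P ! j)) = (W i j * g K (lx P!i) (lx P!j))^2"
        by (simp add: W_def power2_eq_square)
    qed
    then show "(side P)\<^sup>2 / 4 * (\<Sum>i<?n. \<Sum>j<?n. lw P ! i * lw P ! j * (g K (lx P ! i) (lx P ! j) * pv P Th K (lx P ! i) (lx P ! j)))
       = (side P)\<^sup>2 / 4 * (\<Sum>i<?n. \<Sum>j<?n. (W i j * g K (lx P!i) (lx P!j))^2)" by simp
  qed
  ultimately have z: "(\<Sum>K\<in>cells P. (side P)^2 / 4 * (\<Sum>i<?n. \<Sum>j<?n. (W i j * g K (lx P!i) (lx P!j))^2)) = 0"
    by simp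
  have fin: "finite (cells P)" unfolding cells_def by simp
  have sp: "(side P)^2 / 4 > 0" using side_pos[OF v] by simp
  have "(side P)^2 / 4 * (\<Sum>i<?n. \<Sum>j<?n. (W i j * g K0 (lx P!i) (lx P!j))^2) = 0"
    by (rule sum_nonneg_0[OF fin _ z K0]) (intro mult_nonneg_nonneg sum_nonneg, simp_all)
  then have "(\<Sum>i<?n. \<Sum>j<?n. (W i j * g K0 (lx P!i) (lx P!j))^2) = 0" using sp by simp
  note zz = this
  have "(\<Sum>j<?n. (W i0 j * g K0 (lx P!i0) (lx P!j))^2) = 0"
    using sum_nonneg_0[of "{..<?n}" "\<lambda>i. \<Sum>j<?n. (W i j * g K0 (lx P!i) (lx P!j))^2", OF finite_lessThan _ zz] i0
    by (simp add: sum_nonneg)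
  note zz2 = this
  have "(W i0 j0 * g K0 (lx P!i0) (lx P!j0))^2 = 0"
    using sum_nonneg_0[of "{..<?n}" "\<lambda>j. (W i0 j * g K0 (lx P!i0) (lx P!j))^2", OF finite_lessThan _ zz2] j0
    by simp
  then show ?thesis unfolding W_def g_def by simp
qed




definition evec :: "nat \<Rightarrow> vfun" where "evec c = (\<lambda>i. if i = c then one_s else zero_s)"

lemma pv_evec_fun: "pv P (evec c i) K = (\<lambda>x y. if i = c then 1 else 0)"
  by (intro ext) (simp add: evec_def)
lemma pv_evec[simp]: "pv P (evec c i) K x y = (if i = c then 1 else 0)"
  by (simp add: evec_def)
lemma pd_evec[simp]: "pd P d (evec c i) K x y = 0"
  by (simp add: evec_def)
lemma strain_evec[simp]: "strain P (evec c) i j K x y = 0"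
  by (simp add: strain_def)
lemma divg_evec[simp]: "divg P (evec c) K x y = 0"
  by (simp add: divg_def)
lemma fjump_evec[simp]: "fjump P d (pv P (evec c i)) K s = 0"
  unfolding fjump_def trm_def trp_def pv_evec_fun by (simp add: prod.case_eq_if)
lemma pv_one_fun: "pv P one_s K = (\<lambda>x y. 1)"
  by (intro ext) simp
lemma fjump_one[simp]: "fjump P d (pv P one_s) K s = 0"
  unfolding fjump_def trm_def trp_def pv_one_fun by (simp add: prod.case_eq_if)
lemma favg_one[simp]: "favg P d (pv P one_s) K s = 1"
  unfolding favg_def trm_def trp_def pv_one_fun by (simp add: prod.case_eq_if)

lemma strain_evec_fun: "strain P (evec c) i j = (\<lambda>K x y. 0)"
  by (intro ext) simp
lemma divg_evec_fun: "divg P (evec c) = (\<lambda>K x y. 0)"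
  by (intro ext) simp
lemma favg_zero[simp]: "favg P d (\<lambda>K x y. 0) K s = 0"
  unfolding favg_def trm_def trp_def by (simp add: prod.case_eq_if)

lemma a_eps_evec: "a_eps P u (evec c) = 0"
  unfolding a_eps_def strain_evec_fun by (simp add: lvol_zero lface_zero)
lemma a_lam_evec: "a_lam P u (evec c) = 0"
  unfolding a_lam_def divg_evec_fun by (simp add: lvol_zero lface_zero)
lemma a_D_one: "a_D P e one_s = 0"
  unfolding a_D_def by (simp add: lvol_zero lface_zero)
lemma a_eps_self: "a_eps P u u = b_eps P u one_s"
  unfolding a_eps_def b_eps_def by simp
lemma a_lam_self: "a_lam P u u = b_lam P u one_s"
  unfolding a_lam_def b_lam_def by (simp add: power2_eq_square)

lemma sel2: "c < 2 \<Longrightarrow> (\<Sum>i<2. F i * pv P (evec c i) K x y) = F c"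
  by (cases c) (auto simp: sum2)

lemma kin_pt:
  fixes w r m0 m1 u0 u1 :: real
  assumes "w * (m0 - r * u0) = 0" "w * (m1 - r * u1) = 0" "r > 0"
  shows "w * (m0 / (2 * r) * m0 + m1 / (2 * r) * m1) = w * (r * u0 * u0 / 2 + r * u1 * u1 / 2)"
proof (cases "w = 0")
  case True then show ?thesis by simp
next
  case False
  then have "m0 = r * u0" "m1 = r * u1" using assms by auto
  then show ?thesis using assms(3) by (simp add: field_simps power2_eq_square)
qed

lemma kin_lvol:
  assumes v: "valid_params P" and r: "recover P U u e"
    and pos: "\<forall>K\<in>cells P. \<forall>(\<xi>, \<eta>)\<in>GL_pts P. pv P (U 0) K \<xi> \<eta> > 0"
  shows "lvol P (\<lambda>K x y. \<Sum>i<2. pv P (U (Suc i)) K x y / (2 * pv P (U 0) K x y) * pv P (U (Suc i)) K x y)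
       = lvol P (\<lambda>K x y. \<Sum>i<2. pv P (U 0) K x y * pv P (u i) K x y * pv P (u i) K x y / 2)"
proof (rule lvol_cong_w)
  fix K i j assume K: "K \<in> cells P" and i: "i < length (lx P)" and j: "j < length (lx P)"
  have "(lx P!i, lx P!j) \<in> GL_pts P" unfolding GL_pts_def using i j by simp
  then have p: "pv P (U 0) K (lx P!i) (lx P!j) > 0" using pos K by blast
  show "lw P!i * lw P!j * (\<Sum>i'<2. pv P (U (Suc i')) K (lx P!i) (lx P!j) / (2 * pv P (U 0) K (lx P!i) (lx P!j)) * pv P (U (Suc i')) K (lx P!i) (lx P!j))
      = lw P!i * lw P!j * (\<Sum>i'<2. pv P (U 0) K (lx P!i) (lx P!j) * pv P (u i') K (lx P!i) (lx P!j) * pv P (u i') K (lx P!i) (lx P!j) / 2)"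
    unfolding sum2
    by (rule kin_pt[OF recover_pt[OF v r _ K i j] recover_pt[OF v r _ K i j] p]) simp_all
qed




lemma mom_total:
  assumes v: "valid_params P"
    and rH: "recover P UHl uH eH"
    and mom: "visc_mom P (UHl 0) uH ust"
    and uP_def: "uP = lc 2 ust (-1) uH"
    and rhoP: "U4 0 = UHl 0"
    and rP: "recover P U4 uP eP"
    and c: "c < 2"
  shows "lvol P (pv P (U4 (Suc c))) = lvol P (pv P (UHl (Suc c)))"
proof -
  define rho where "rho = pv P (UHl 0)"
  have m4: "lvol P (pv P (U4 (Suc c))) = lvol P (\<lambda>K x y. rho K x y * pv P (uP c) K x y)"
  proof -
    have "lvol P (\<lambda>K \<xi> \<eta>. \<Sum>i<2. pv P (U4 (Suc i)) K \<xi> \<eta> * pv P (evec c i) K \<xi> \<eta>)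
        = lvol P (\<lambda>K \<xi> \<eta>. \<Sum>i<2. pv P (U4 0) K \<xi> \<eta> * pv P (uP i) K \<xi> \<eta> * pv P (evec c i) K \<xi> \<eta>)"
      using rP unfolding recover_def by blast
    then show ?thesis unfolding sel2[OF c] rhoP rho_def .
  qed
  have mH: "lvol P (pv P (UHl (Suc c))) = lvol P (\<lambda>K x y. rho K x y * pv P (uH c) K x y)"
  proof -
    have "lvol P (\<lambda>K \<xi> \<eta>. \<Sum>i<2. pv P (UHl (Suc i)) K \<xi> \<eta> * pv P (evec c i) K \<xi> \<eta>)
        = lvol P (\<lambda>K \<xi> \<eta>. \<Sum>i<2. pv P (UHl 0) K \<xi> \<eta> * pv P (uH i) K \<xi> \<eta> * pv P (evec c i) K \<xi> \<eta>)"
      using rH unfolding recover_def by blast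
    then show ?thesis unfolding sel2[OF c] rho_def .
  qed
  have ms: "lvol P (\<lambda>K x y. rho K x y * pv P (ust c) K x y) = lvol P (\<lambda>K x y. rho K x y * pv P (uH c) K x y)"
  proof -
    have "lvol P (\<lambda>K \<xi> \<eta>. \<Sum>i<2. pv P (UHl 0) K \<xi> \<eta> * pv P (ust i) K \<xi> \<eta> * pv P (evec c i) K \<xi> \<eta>)
      + dt P / (2 * Rey P) * a_eps P ust (evec c) + dt P / (3 * Rey P) * a_lam P ust (evec c)
      = lvol P (\<lambda>K \<xi> \<eta>. \<Sum>i<2. pv P (UHl 0) K \<xi> \<eta> * pv P (uH i) K \<xi> \<eta> * pv P (evec c i) K \<xi> \<eta>)"
      using mom unfolding visc_mom_def by blast
    then show ?thesis unfolding sel2[OF c] rho_def a_eps_evec a_lam_evec by simp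
  qed
  have "lvol P (\<lambda>K x y. rho K x y * pv P (uP c) K x y)
      = lvol P (\<lambda>K x y. 2 * (rho K x y * pv P (ust c) K x y) + (-1) * (rho K x y * pv P (uH c) K x y))"
    unfolding uP_def pv_lc by (simp add: algebra_simps)
  also have "\<dots> = lvol P (\<lambda>K x y. rho K x y * pv P (uH c) K x y)"
    by (simp only: lvol_lin ms)
  finally show ?thesis using m4 mH by simp
qed

lemma en_total:
  assumes v: "valid_params P"
    and rho_pos: "\<forall>K\<in>cells P. \<forall>(\<xi>, \<eta>)\<in>GL_pts P. pv P (UHl 0) K \<xi> \<eta> > 0"
    and rH: "recover P UHl uH eH"
    and mom: "visc_mom P (UHl 0) uH ust"
    and uP_def: "uP = lc 2 ust (-1) uH"
    and en: "visc_en P (UHl 0) eH ust est"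
    and eP_def: "eP = lcs (1 / vth P) est (1 - 1 / vth P) eH"
    and rhoP: "U4 0 = UHl 0"
    and rP: "recover P U4 uP eP"
  shows "lvol P (pv P (U4 3)) = lvol P (pv P (UHl 3))"
proof -
  define rho where "rho = pv P (UHl 0)"
  have pos4: "\<forall>K\<in>cells P. \<forall>(\<xi>, \<eta>)\<in>GL_pts P. pv P (U4 0) K \<xi> \<eta> > 0"
    using rho_pos rhoP by simp
  define XeP where "XeP = lvol P (\<lambda>K x y. rho K x y * pv P eP K x y)"
  define XeH where "XeH = lvol P (\<lambda>K x y. rho K x y * pv P eH K x y)"
  define Xes where "Xes = lvol P (\<lambda>K x y. rho K x y * pv P est K x y)"
  define KP where "KP = lvol P (\<lambda>K x y. \<Sum>i<2. rho K x y * pv P (uP i) K x y * pv P (uP i) K x y / 2)"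
  define KH where "KH = lvol P (\<lambda>K x y. \<Sum>i<2. rho K x y * pv P (uH i) K x y * pv P (uH i) K x y / 2)"
  define SS where "SS = lvol P (\<lambda>K x y. \<Sum>i<2. rho K x y * pv P (ust i) K x y * pv P (ust i) K x y)"
  define DD where "DD = lvol P (\<lambda>K x y. \<Sum>i<2. rho K x y * pv P (uH i) K x y * pv P (ust i) K x y)"
  define Be where "Be = b_eps P ust one_s"
  define Bl where "Bl = b_lam P ust one_s"
  have E4: "lvol P (pv P (U4 3)) = XeP + KP"
  proof -
    have "lvol P (\<lambda>K \<xi> \<eta>. pv P (U4 3) K \<xi> \<eta> * pv P one_s K \<xi> \<eta>)
               = lvol P (\<lambda>K \<xi> \<eta>. pv P (U4 0) K \<xi> \<eta> * pv P eP K \<xi> \<eta> * pv P one_s K \<xi> \<eta>)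
               + lvol P (\<lambda>K \<xi> \<eta>. \<Sum>i<2. pv P (U4 (Suc i)) K \<xi> \<eta> / (2 * pv P (U4 0) K \<xi> \<eta>)
                                         * pv P (U4 (Suc i)) K \<xi> \<eta> * pv P one_s K \<xi> \<eta>)"
      using rP unfolding recover_def by blast
    then have "lvol P (pv P (U4 3)) = lvol P (\<lambda>K \<xi> \<eta>. pv P (U4 0) K \<xi> \<eta> * pv P eP K \<xi> \<eta>) + lvol P (\<lambda>K \<xi> \<eta>. \<Sum>i<2. pv P (U4 (Suc i)) K \<xi> \<eta> / (2 * pv P (U4 0) K \<xi> \<eta>)
                                         * pv P (U4 (Suc i)) K \<xi> \<eta>)"
      unfolding pv_one mult_1_right .
    then show ?thesis unfolding kin_lvol[OF v rP pos4] XeP_def KP_def rho_def by (simp only: rhoP)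
  qed
  have EH: "lvol P (pv P (UHl 3)) = XeH + KH"
  proof -
    have "lvol P (\<lambda>K \<xi> \<eta>. pv P (UHl 3) K \<xi> \<eta> * pv P one_s K \<xi> \<eta>)
               = lvol P (\<lambda>K \<xi> \<eta>. pv P (UHl 0) K \<xi> \<eta> * pv P eH K \<xi> \<eta> * pv P one_s K \<xi> \<eta>)
               + lvol P (\<lambda>K \<xi> \<eta>. \<Sum>i<2. pv P (UHl (Suc i)) K \<xi> \<eta> / (2 * pv P (UHl 0) K \<xi> \<eta>)
                                         * pv P (UHl (Suc i)) K \<xi> \<eta> * pv P one_s K \<xi> \<eta>)"
      using rH unfolding recover_def by blast
    then have "lvol P (pv P (UHl 3)) = XeH + lvol P (\<lambda>K \<xi> \<eta>. \<Sum>i<2. pv P (UHl (Suc i)) K \<xi> \<eta> / (2 * pv P (UHl 0) K \<xi> \<eta>)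
                                         * pv P (UHl (Suc i)) K \<xi> \<eta>)"
      unfolding XeH_def rho_def pv_one mult_1_right .
    then show ?thesis unfolding kin_lvol[OF v rH rho_pos] KH_def rho_def .
  qed
  have EN: "Xes = XeH + vth P * dt P / Rey P * Be + 2 * vth P * dt P / (3 * Rey P) * Bl"
  proof -
    have "lvol P (\<lambda>K \<xi> \<eta>. pv P (UHl 0) K \<xi> \<eta> * pv P est K \<xi> \<eta> * pv P one_s K \<xi> \<eta>)
      + vth P * dt P * lamb P / Rey P * a_D P est one_s
      = lvol P (\<lambda>K \<xi> \<eta>. pv P (UHl 0) K \<xi> \<eta> * pv P eH K \<xi> \<eta> * pv P one_s K \<xi> \<eta>)
      + vth P * dt P / Rey P * b_eps P ust one_s + 2 * vth P * dt P / (3 * Rey P) * b_lam P ust one_s"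
      using en unfolding visc_en_def by blast
    then show ?thesis unfolding Xes_def XeH_def Be_def Bl_def rho_def pv_one mult_1_right a_D_one by simp
  qed
  have EP: "XeP = (1 / vth P) * Xes + (1 - 1 / vth P) * XeH"
  proof -
    have "XeP = lvol P (\<lambda>K x y. (1 / vth P) * (rho K x y * pv P est K x y) + (1 - 1 / vth P) * (rho K x y * pv P eH K x y))"
      unfolding XeP_def eP_def pv_lcs by (simp add: algebra_simps)
    then show ?thesis unfolding Xes_def XeH_def by (simp only: lvol_lin)
  qed
  have MO: "SS + dt P / (2 * Rey P) * Be + dt P / (3 * Rey P) * Bl = DD"
  proof -
    have "lvol P (\<lambda>K \<xi> \<eta>. \<Sum>i<2. pv P (UHl 0) K \<xi> \<eta> * pv P (ust i) K \<xi> \<eta> * pv P (ust i) K \<xi> \<eta>)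
      + dt P / (2 * Rey P) * a_eps P ust ust + dt P / (3 * Rey P) * a_lam P ust ust
      = lvol P (\<lambda>K \<xi> \<eta>. \<Sum>i<2. pv P (UHl 0) K \<xi> \<eta> * pv P (uH i) K \<xi> \<eta> * pv P (ust i) K \<xi> \<eta>)"
      using mom unfolding visc_mom_def by blast
    then show ?thesis unfolding SS_def DD_def Be_def Bl_def rho_def a_eps_self a_lam_self .
  qed
  have KE: "KP = KH + (2 * SS + (-2) * DD)"
  proof -
    define fH where "fH K x y = (\<Sum>i<2. rho K x y * pv P (uH i) K x y * pv P (uH i) K x y / 2)" for K x y
    define fS where "fS K x y = (\<Sum>i<2. rho K x y * pv P (ust i) K x y * pv P (ust i) K x y)" for K x y
    define fD where "fD K x y = (\<Sum>i<2. rho K x y * pv P (uH i) K x y * pv P (ust i) K x y)" for K x y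
    have "KP = lvol P (\<lambda>K x y. 1 * fH K x y + 1 * (2 * fS K x y + (-2) * fD K x y))"
      unfolding KP_def fH_def fS_def fD_def uP_def pv_lc sum2
      by (rule arg_cong[where f = "lvol P"]) (intro ext, simp add: field_simps)
    also have "\<dots> = KH + (2 * SS + (-2) * DD)"
      unfolding lvol_lin KH_def SS_def DD_def fH_def fS_def fD_def
      by simp
    finally show ?thesis .
  qed
  have vth: "vth P \<noteq> 0" and re: "Rey P \<noteq> 0" using v unfolding valid_params_def by auto
  have "lvol P (pv P (U4 3)) = XeP + KP" by (rule E4)
  also have "\<dots> = XeH + KH"
    unfolding EP EN KE MO[symmetric] using vth re by (simp add: field_simps)
  also have "\<dots> = lvol P (pv P (UHl 3))" by (rule EH[symmetric])
  finally show ?thesis .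
qed




lemma efix_total:
  assumes v: "valid_params P" and ef: "energy_fix P U U'"
  shows "gtotal P (U' c) = gtotal P (U c)"
proof (cases "\<forall>K\<in>cells P. inGeps P (\<lambda>c. avg P (U c) K)")
  case True then show ?thesis using ef unfolding energy_fix_def by simp
next
  case False
  have "\<exists>T Es. T \<subseteq> cells P \<and> en_min P U T Es \<and>
             U' = (\<lambda>c K. if c = 3 \<and> K \<in> T
                          then (\<lambda>p q. U 3 K p q + (if p = 0 \<and> q = 0 then Es K - avg P (U 3) K else 0))
                          else U c K)"
    using ef False unfolding energy_fix_def by (simp only: if_False simp_thms)
  then obtain T Es where T: "T \<subseteq> cells P" and em: "en_min P U T Es"
    and U': "U' = (\<lambda>c K. if c = 3 \<and> K \<in> T
                          then (\<lambda>p q. U 3 K p q + (if p = 0 \<and> q = 0 then Es K - avg P (U 3) K else 0))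
                          else U c K)"
    by blast
  have fin: "finite (cells P)" unfolding cells_def by simp
  then have finT: "finite T" using T finite_subset by blast
  have feas: "(\<Sum>i\<in>T. Es i * (side P)^2) = (\<Sum>i\<in>T. avg P (U 3) i * (side P)^2)"
    using em unfolding en_min_def en_feasible_def by blast
  show ?thesis
  proof (cases "c = 3")
    case False
    then have "U' c = U c" unfolding U' by simp
    then show ?thesis by simp
  next
    case True
    have g: "gcell P (pv P (U' 3) K) = gcell P (pv P (U 3) K) + (if K \<in> T then (Es K - avg P (U 3) K) * (side P)^2 else 0)" for K
    proof (cases "K \<in> T")
      case True
      have "U' 3 K = (\<lambda>p q. 1 * U 3 K p q + (if p = 0 \<and> q = 0 then Es K - avg P (U 3) K else 0))"
        unfolding U' using True by simp
      then show ?thesis using True gcell_shift[OF v, of 1 "U 3 K"] by (simp add: pv_fun)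
    next
      case False
      then have "U' 3 K = U 3 K" unfolding U' by simp
      then show ?thesis using False by (simp add: pv_fun)
    qed
    have "gtotal P (U' 3) = gtotal P (U 3) + (\<Sum>K\<in>cells P. (if K \<in> T then (Es K - avg P (U 3) K) * (side P)^2 else 0))"
      unfolding gtotal_def g by (simp add: sum.distrib)
    also have "(\<Sum>K\<in>cells P. (if K \<in> T then (Es K - avg P (U 3) K) * (side P)^2 else 0)) = (\<Sum>K\<in>T. (Es K - avg P (U 3) K) * (side P)^2)"
      using T fin by (simp add: sum.If_cases Int_absorb1)
    also have "\<dots> = 0" using feas by (simp add: left_diff_distrib sum_subtractf)
    finally show ?thesis using True by simp
  qed
qed

theorem theorem1:
  fixes P :: prm and taus1 taus2 :: "real list"
    and Uold UH UHl U4 U4f UP Unew uH ust uP :: vfun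
    and eH est eP :: sfun
  assumes params: "valid_params P"
    and step_H1: "hyp_step P taus1 Uold UH"
    and lim_GL: "UHl = zs P (GL_pts P) UH"
    and rho_pos: "\<forall>K\<in>cells P. \<forall>(\<xi>, \<eta>)\<in>GL_pts P. pv P (UHl 0) K \<xi> \<eta> > 0"
    and recover_H: "recover P UHl uH eH"
    and momentum: "visc_mom P (UHl 0) uH ust"
    and uP_def: "uP = lc 2 ust (-1) uH"
    and energy: "visc_en P (UHl 0) eH ust est"
    and eP_def: "eP = lcs (1 / vth P) est (1 - 1 / vth P) eH"
    and rhoP: "U4 0 = UHl 0"
    and recover_P: "recover P U4 uP eP"
    and fix_energy: "energy_fix P U4 U4f"
    and lim_S: "UP = zs P (S_pts P) U4f"
    and admissible: "\<forall>K\<in>cells P. \<forall>(\<xi>, \<eta>)\<in>S_pts P. inG (st P UP K \<xi> \<eta>)"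
    and step_H2: "hyp_step P taus2 UP Unew"
  shows "gtotal P (Uold 0) = gtotal P (Unew 0)
       \<and> (gtotal P (Uold 1), gtotal P (Uold 2)) = (gtotal P (Unew 1), gtotal P (Unew 2))
       \<and> gtotal P (Uold 3) = gtotal P (Unew 3)"
proof -
  have v: "valid_params P" by (rule params)
  have par: "gtotal P (U4 c) = gtotal P (UHl c)" if c: "c < 4" for c
  proof -
    consider "c = 0" | "c = 1" | "c = 2" | "c = 3" using c by linarith
    then show ?thesis
    proof cases
      case 1 then show ?thesis using rhoP by simp
    next
      case 2 then show ?thesis
        using mom_total[OF v recover_H momentum uP_def rhoP recover_P, of 0] by (simp add: gtotal_lvol[OF v])
    next
      case 3 then show ?thesis
        using mom_total[OF v recover_H momentum uP_def rhoP recover_P, of 1] by (simp add: gtotal_lvol[OF v] numeral_2_eq_2)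
    next
      case 4 then show ?thesis
        using en_total[OF v rho_pos recover_H momentum uP_def energy eP_def rhoP recover_P] by (simp add: gtotal_lvol[OF v])
    qed
  qed
  have cons: "gtotal P (Uold c) = gtotal P (Unew c)" if c: "c < 4" for c
  proof -
    have "gtotal P (Unew c) = gtotal P (UP c)" by (rule hyp_total[OF v step_H2 c])
    also have "\<dots> = gtotal P (U4f c)" unfolding lim_S by (rule zs_total[OF v])
    also have "\<dots> = gtotal P (U4 c)" by (rule efix_total[OF v fix_energy])
    also have "\<dots> = gtotal P (UHl c)" by (rule par[OF c])
    also have "\<dots> = gtotal P (UH c)" unfolding lim_GL by (rule zs_total[OF v])
    also have "\<dots> = gtotal P (Uold c)" by (rule hyp_total[OF v step_H1 c])
    finally show ?thesis by simp
  qed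
  show ?thesis using cons[of 0] cons[of 1] cons[of 2] cons[of 3] by simp
qed


end
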